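(* Let $N\ge1$, $\mathbf{M}=\mathrm{diag}(m_0,\dots,m_N)$ arbitrary real diagonal, $\mathbf{m}=(m_0,\dots,m_N)^\top$, and let $\mathbf{Q}_N$ be the tridiagonal matrix with $(\mathbf{Q}_N)_{kk}=-N$, $(\mathbf{Q}_N)_{k+1,k}=N-k$, $(\mathbf{Q}_N)_{k-1,k}=k$ (indices $0,\dots,N$) and zeros elsewhere. Let $\mathbf{C}$ be the $(N+1)\times(N+1)$ matrix with entries $c_{ik}$ defined by $\sum_{i=0}^N c_{ik}t^i=(1-t)^k(1+t)^{N-k}$ (so its columns are eigenvectors of $\mathbf{Q}_N$ and $\mathbf{C}^{-1}=2^{-N}\mathbf{C}$). For $\mu>0$ let $\mathbf{p}(\mu)\in S_{N+1}$ be the positive solution of $(\mathbf{M}+\mu\mathbf{Q}_N)\mathbf{p}=\overline{m}\,\mathbf{p}$ with $\overline{m}=\mathbf{m}\cdot\mathbf{p}$, and put $\mathbf{x}(\mu)=\mathbf{C}^{-1}\mathbf{p}(\mu)$. Let $\hat{\mathbf{x}}=2^{-N}(1,0,\dots,0)^\top$. Then for all $\mu>0$, $$\|\mathbf{x}(\mu)-\hat{\mathbf{x}}\|_1\le\frac{1}{\mu}\|\mathbf{M}\|_1,$$ and for all $\mu$ with $2\mu>(2^{N+1}+1)\|\mathbf{M}\|_1$, $$\|\mathbf{x}'(\mu)\|_1\le\frac{2N}{2\mu-(2^{N+1}+1)\|\mathbf{M}\|_1}.$$ In particular $\lim_{\mu\to\infty}\mathbf{x}(\mu)=\hat{\mathbf{x}}$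 and $\lim_{\mu\to\infty}\mathbf{x}'(\mu)=0$.
   Context: $S_{N+1}=\{\mathbf{p}\in\mathbb{R}^{N+1}:\mathbf{p}\ge0,\ \sum_i p_i=1\}$. $\mathbf{p}(\mu)$ is the normalized Perron eigenvector of $\mathbf{M}+\mu\mathbf{Q}_N$ for its dominant eigenvalue $\overline{m}(\mu)$. $\|\cdot\|_1$ is the $\ell^1$ norm on vectors and the induced operator norm on matrices (for diagonal $\mathbf{M}$, $\|\mathbf{M}\|_1=\max_k|m_k|$). Primes denote derivatives with respect to $\mu$. *)

theory Defs
  imports "HOL-Analysis.Analysis" "HOL-Computational_Algebra.Polynomial"
begin

text \<open>Vectors and matrices indexed by 0..N are represented as functions on nat
  (only indices \<le> N matter).\<close>

definition Qmat :: "nat \<Rightarrow> nat \<Rightarrow> nat \<Rightarrow> real" where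
  "Qmat N i j = (if i = j then - real N
                 else if i = j + 1 then real N - real j
                 else if i + 1 = j then real j
                 else 0)"

definition Cmat :: "nat \<Rightarrow> nat \<Rightarrow> nat \<Rightarrow> real" where
  "Cmat N i k = coeff ([:1, -1:] ^ k * [:1, 1:] ^ (N - k)) i"

text \<open>x = C^{-1} p, using C^{-1} = 2^{-N} C.\<close>
definition xvec :: "nat \<Rightarrow> (nat \<Rightarrow> real) \<Rightarrow> nat \<Rightarrow> real" where
  "xvec N p i = (1 / 2 ^ N) * (\<Sum>k\<le>N. Cmat N i k * p k)"

definition norm1 :: "nat \<Rightarrow> (nat \<Rightarrow> real) \<Rightarrow> real" where
  "norm1 N v = (\<Sum>k\<le>N. \<bar>v k\<bar>)"

text \<open>Induced l1 operator norm of diag(m_0..m_N) = max |m_k|.\<close>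
definition Mnorm1 :: "nat \<Rightarrow> (nat \<Rightarrow> real) \<Rightarrow> real" where
  "Mnorm1 N m = Max ((\<lambda>k. \<bar>m k\<bar>) ` {..N})"

definition xhat :: "nat \<Rightarrow> nat \<Rightarrow> real" where
  "xhat N i = (if i = 0 then 1 / 2 ^ N else 0)"

end

theory Submission
  imports Defs
begin


definition fpol :: "nat \<Rightarrow> nat \<Rightarrow> real poly" where
  "fpol N k = [:1, -1:] ^ k * [:1, 1:] ^ (N - k)"

lemma Cmat_fpol: "Cmat N i k = coeff (fpol N k) i"
  by (simp add: Cmat_def fpol_def)

lemma degree_fpol: "k \<le> N \<Longrightarrow> degree (fpol N k) \<le> N"
proof -
  assume k: "k \<le> N"
  have "degree (fpol N k) \<le> degree ([:1, -1::real:] ^ k) + degree ([:1, 1::real:] ^ (N - k))"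
    unfolding fpol_def by (rule degree_mult_le)
  also have "\<dots> \<le> k * 1 + (N - k) * 1"
    by (intro add_mono order.trans[OF degree_power_le]) auto
  finally show ?thesis using k by simp
qed

lemma poly_fpol: "poly (fpol N k) s = (1 - s) ^ k * (1 + s) ^ (N - k)"
  by (simp add: fpol_def)

lemma poly_sumN:
  fixes p :: "real poly"
  assumes "degree p \<le> n" shows "poly p x = (\<Sum>i\<le>n. coeff p i * x ^ i)"
proof -
  have "poly p x = (\<Sum>i\<le>degree p. coeff p i * x ^ i)" by (rule poly_altdef)
  also have "\<dots> = (\<Sum>i\<le>n. coeff p i * x ^ i)"
    using assms by (intro sum.mono_neutral_left) (auto simp: coeff_eq_0 not_le)
  finally show ?thesis .
qed

lemma coeff_fpol_0: "coeff (fpol N k) 0 = 1"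
  by (simp add: fpol_def coeff_mult coeff_0_power)

lemma coeff_fpol_big: "k \<le> N \<Longrightarrow> N < i \<Longrightarrow> coeff (fpol N k) i = 0"
  using degree_fpol[of k N] by (intro coeff_eq_0) simp

lemma poly_eq_on_infinite:
  fixes p q :: "real poly"
  assumes "\<And>s. s \<noteq> -1 \<Longrightarrow> poly p s = poly q s"
  shows "p = q"
proof (rule ccontr)
  assume "p \<noteq> q"
  then have "p - q \<noteq> 0" by simp
  then have "finite {x. poly (p - q) x = 0}" by (rule poly_roots_finite)
  moreover have "UNIV - {-1} \<subseteq> {x. poly (p - q) x = 0}" using assms by auto
  ultimately have "finite (UNIV - {-1::real})" by (rule rev_finite_subset)
  then show False by (simp add: infinite_UNIV_char_0)
qed

lemma key_inv:
  assumes j: "j \<le> N"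
  shows "(\<Sum>k\<le>N. smult (coeff (fpol N j) k) (fpol N k)) = smult (2 ^ N) (monom 1 j)"
proof (rule poly_eq_on_infinite)
  fix s :: real assume s: "s \<noteq> -1"
  then have s1: "1 + s \<noteq> 0" by (metis add.commute add_eq_0_iff)
  define u where "u = (1 - s) / (1 + s)"
  have "poly (\<Sum>k\<le>N. smult (coeff (fpol N j) k) (fpol N k)) s
      = (\<Sum>k\<le>N. coeff (fpol N j) k * ((1 - s) ^ k * (1 + s) ^ (N - k)))"
    by (simp add: poly_sum poly_fpol)
  also have "\<dots> = (\<Sum>k\<le>N. (1 + s) ^ N * (coeff (fpol N j) k * u ^ k))"
  proof (rule sum.cong[OF refl])
    fix k assume "k \<in> {..N}"
    then have "(1 + s) ^ N = (1 + s) ^ k * (1 + s) ^ (N - k)"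
      by (simp add: power_add[symmetric])
    then show "coeff (fpol N j) k * ((1 - s) ^ k * (1 + s) ^ (N - k))
       = (1 + s) ^ N * (coeff (fpol N j) k * u ^ k)"
      using s1 by (simp add: u_def power_divide field_simps)
  qed
  also have "\<dots> = (1 + s) ^ N * poly (fpol N j) u"
    by (simp add: sum_distrib_left poly_sumN[OF degree_fpol[OF j]])
  also have "\<dots> = (1 + s) ^ N * ((1 - u) ^ j * (1 + u) ^ (N - j))"
    by (simp add: poly_fpol)
  also have "1 - u = 2 * s / (1 + s)" using s1 by (simp add: u_def field_simps)
  also have "1 + u = 2 / (1 + s)" using s1 by (simp add: u_def field_simps)
  also have "(1 + s) ^ N * ((2 * s / (1 + s)) ^ j * (2 / (1 + s)) ^ (N - j)) = 2 ^ N * s ^ j"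
  proof -
    have "(1 + s) ^ N = (1 + s) ^ j * (1 + s) ^ (N - j)" "(2::real) ^ N = 2 ^ j * 2 ^ (N - j)"
      using j by (simp_all add: power_add[symmetric])
    then show ?thesis using s1 by (simp add: power_divide power_mult_distrib field_simps)
  qed
  finally show "poly (\<Sum>k\<le>N. smult (coeff (fpol N j) k) (fpol N k)) s = poly (smult (2 ^ N) (monom 1 j)) s"
    by (simp add: poly_monom)
qed

definition Cv :: "nat \<Rightarrow> (nat \<Rightarrow> real) \<Rightarrow> nat \<Rightarrow> real" where
  "Cv N v i = (\<Sum>k\<le>N. Cmat N i k * v k)"

lemma CC:
  assumes i: "i \<le> N"
  shows "Cv N (Cv N v) i = 2 ^ N * v i"
proof -
  have "Cv N (Cv N v) i = (\<Sum>k\<le>N. \<Sum>j\<le>N. Cmat N i k * (Cmat N k j * v j))"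
    by (simp add: Cv_def sum_distrib_left)
  also have "\<dots> = (\<Sum>j\<le>N. v j * (\<Sum>k\<le>N. coeff (fpol N j) k * coeff (fpol N k) i))"
    by (subst sum.swap) (simp add: sum_distrib_left Cmat_fpol mult_ac)
  also have "\<dots> = (\<Sum>j\<le>N. v j * coeff (\<Sum>k\<le>N. smult (coeff (fpol N j) k) (fpol N k)) i)"
    by (simp add: coeff_sum)
  also have "\<dots> = (\<Sum>j\<le>N. v j * (if j = i then 2 ^ N else 0))"
    by (intro sum.cong refl) (simp add: key_inv)
  also have "\<dots> = 2 ^ N * v i" using i by (simp add: if_distrib cong: if_cong)
  finally show ?thesis .
qed

definition Top :: "nat \<Rightarrow> real poly \<Rightarrow> real poly" where
  "Top N P = smult (- real N) ([:1, -1:] * P) + [:1, 0, -1:] * pderiv P"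

lemma A_pderiv: "poly ([:1, -1:] * pderiv ([:1, -1:] ^ k)) s = - real k * poly ([:1, -1::real:] ^ k) s"
proof (cases k)
  case (Suc n)
  then show ?thesis by (simp add: pderiv_power_Suc pderiv_pCons del: power_Suc) (simp add: algebra_simps)
qed simp

lemma B_pderiv: "poly ([:1, 1:] * pderiv ([:1, 1:] ^ k)) s = real k * poly ([:1, 1::real:] ^ k) s"
proof (cases k)
  case (Suc n)
  then show ?thesis by (simp add: pderiv_power_Suc pderiv_pCons del: power_Suc) (simp add: algebra_simps)
qed simp

lemma Top_fpol: "k \<le> N \<Longrightarrow> Top N (fpol N k) = smult (- 2 * real k) (fpol N k)"
proof -
  assume kN: "k \<le> N"
  have "poly (Top N (fpol N k)) s = poly (smult (- 2 * real k) (fpol N k)) s" for s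
  proof -
    have e: "poly [:1, 0, -1:] s = poly [:1, -1:] s * poly [:1,1::real:] s" by (simp add: algebra_simps)
    have "poly (Top N (fpol N k)) s = - real N * ((1 - s) * poly (fpol N k) s)
       + poly [:1, -1:] s * poly [:1,1::real:] s * poly (pderiv (fpol N k)) s"
      by (simp add: Top_def e algebra_simps)
    also have "poly [:1, -1:] s * poly [:1,1::real:] s * poly (pderiv (fpol N k)) s
       = poly ([:1, -1:] * pderiv ([:1, -1:] ^ k)) s * poly [:1,1::real:] s * poly ([:1, 1:] ^ (N - k)) s
       + poly ([:1, 1:] * pderiv ([:1, 1:] ^ (N - k))) s * poly [:1,-1::real:] s * poly ([:1, -1:] ^ k) s"
      by (simp add: fpol_def pderiv_mult algebra_simps)
    also have "\<dots> = - real k * (1 + s) * poly (fpol N k) s + real (N - k) * (1 - s) * poly (fpol N k) s"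
      unfolding A_pderiv B_pderiv by (simp add: fpol_def)
    finally show ?thesis
      using kN by (simp add: algebra_simps of_nat_diff)
  qed
  then show ?thesis by (intro poly_eq_poly_eq_iff[THEN iffD1] ext)
qed

lemma Qsum:
  assumes i: "i \<le> N"
  shows "(\<Sum>j\<le>N. Qmat N i j * w j) = - real N * w i
     + (if i = 0 then 0 else (real N - real (i - 1)) * w (i - 1))
     + (if i < N then real (i + 1) * w (i + 1) else 0)"
proof -
  have e: "Qmat N i j * w j = (if j = i then - real N * w i else 0)
     + (if j = i - 1 \<and> i \<noteq> 0 then (real N - real (i - 1)) * w (i - 1) else 0)
     + (if j = i + 1 then real (i + 1) * w (i + 1) else 0)" for j
    unfolding Qmat_def by (cases "j = i"; cases "i = j + 1"; cases "i + 1 = j") auto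
  have "(\<Sum>j\<le>N. Qmat N i j * w j) = (\<Sum>j\<le>N. (if j = i then - real N * w i else 0)
     + (if j = i - 1 \<and> i \<noteq> 0 then (real N - real (i - 1)) * w (i - 1) else 0)
     + (if j = i + 1 then real (i + 1) * w (i + 1) else 0))"
    by (simp only: e)
  also have "\<dots> = - real N * w i
     + (if i = 0 then 0 else (real N - real (i - 1)) * w (i - 1))
     + (if i < N then real (i + 1) * w (i + 1) else 0)"
    unfolding sum.distrib using i by (simp add: sum.delta' conj_commute) linarith
  finally show ?thesis .
qed

lemma coeff_Top:
  assumes d: "degree P \<le> N" and i: "i \<le> N"
  shows "coeff (Top N P) i = (\<Sum>j\<le>N. Qmat N i j * coeff P j)"
proof -
  have big: "coeff P (i + 1) = 0" if "\<not> i < N" using that i d by (intro coeff_eq_0) simp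
  have q: "(\<Sum>j\<le>N. Qmat N i j * coeff P j) = - real N * coeff P i
     + (if i = 0 then 0 else (real N - real (i - 1)) * coeff P (i - 1))
     + (if i < N then real (i + 1) * coeff P (i + 1) else 0)" by (rule Qsum[OF i])
  show ?thesis
  proof (cases i)
    case 0 then show ?thesis using big q by (simp add: Top_def coeff_pderiv)
  next
    case (Suc n)
    then show ?thesis using big q
      by (cases n) (auto simp: Top_def coeff_pderiv algebra_simps of_nat_diff)
  qed
qed

lemma QC:
  assumes i: "i \<le> N"
  shows "(\<Sum>j\<le>N. Qmat N i j * Cv N v j) = Cv N (\<lambda>k. - 2 * real k * v k) i"
proof -
  have "(\<Sum>j\<le>N. Qmat N i j * Cv N v j) = (\<Sum>k\<le>N. v k * (\<Sum>j\<le>N. Qmat N i j * coeff (fpol N k) j))"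
    unfolding Cv_def Cmat_fpol sum_distrib_left by (subst sum.swap) (simp add: mult_ac)
  also have "\<dots> = (\<Sum>k\<le>N. v k * coeff (Top N (fpol N k)) i)"
    by (intro sum.cong refl) (simp add: coeff_Top[OF degree_fpol i])
  also have "\<dots> = Cv N (\<lambda>k. - 2 * real k * v k) i"
    unfolding Cv_def Cmat_fpol by (intro sum.cong refl) (simp add: Top_fpol)
  finally show ?thesis .
qed

lemma Cv_cong: "(\<And>k. k \<le> N \<Longrightarrow> v k = w k) \<Longrightarrow> Cv N v i = Cv N w i"
  unfolding Cv_def by (intro sum.cong) auto

lemma Cv_div: "Cv N (\<lambda>l. f l / c) j = Cv N f j / c"
  unfolding Cv_def by (simp add: sum_divide_distrib)

lemma CQ:
  assumes k: "k \<le> N"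
  shows "Cv N (\<lambda>i. \<Sum>j\<le>N. Qmat N i j * v j) k = - 2 * real k * Cv N v k"
proof -
  define w where "w = (\<lambda>l. Cv N v l / 2 ^ N)"
  have vw: "v j = Cv N w j" if "j \<le> N" for j
  proof -
    have "Cv N w j = Cv N (Cv N v) j / 2 ^ N"
      unfolding w_def Cv_div ..
    then show ?thesis using CC[OF that] by simp
  qed
  have "Cv N (\<lambda>i. \<Sum>j\<le>N. Qmat N i j * v j) k = Cv N (Cv N (\<lambda>l. - 2 * real l * w l)) k"
  proof (rule Cv_cong)
    fix i assume i: "i \<le> N"
    have "(\<Sum>j\<le>N. Qmat N i j * v j) = (\<Sum>j\<le>N. Qmat N i j * Cv N w j)"
      by (intro sum.cong) (auto simp: vw)
    also have "\<dots> = Cv N (\<lambda>l. - 2 * real l * w l) i" by (rule QC[OF i])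
    finally show "(\<Sum>j\<le>N. Qmat N i j * v j) = Cv N (\<lambda>l. - 2 * real l * w l) i" .
  qed
  also have "\<dots> = 2 ^ N * (- 2 * real k * w k)" by (rule CC[OF k])
  also have "\<dots> = - 2 * real k * Cv N v k" by (simp add: w_def)
  finally show ?thesis .
qed

definition pdom :: "real poly \<Rightarrow> real poly \<Rightarrow> bool" where
  "pdom p P \<longleftrightarrow> (\<forall>i. \<bar>coeff p i\<bar> \<le> coeff P i)"

lemma pdom_mult: "pdom p P \<Longrightarrow> pdom q Q \<Longrightarrow> pdom (p * q) (P * Q)"
  unfolding pdom_def
proof (intro allI)
  fix n assume p: "\<forall>i. \<bar>coeff p i\<bar> \<le> coeff P i" and q: "\<forall>i. \<bar>coeff q i\<bar> \<le> coeff Q i"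
  have "\<bar>coeff (p * q) n\<bar> \<le> (\<Sum>i\<le>n. \<bar>coeff p i * coeff q (n - i)\<bar>)"
    unfolding coeff_mult by (rule sum_abs)
  also have "\<dots> \<le> (\<Sum>i\<le>n. coeff P i * coeff Q (n - i))"
  proof (intro sum_mono)
    fix i
    have P0: "0 \<le> coeff P i" using p abs_ge_zero order_trans by metis
    show "\<bar>coeff p i * coeff q (n - i)\<bar> \<le> coeff P i * coeff Q (n - i)"
      unfolding abs_mult using p q P0 by (intro mult_mono) auto
  qed
  finally show "\<bar>coeff (p * q) n\<bar> \<le> coeff (P * Q) n" by (simp add: coeff_mult)
qed

lemma pdom_power: "pdom p P \<Longrightarrow> pdom (p ^ n) (P ^ n)"
proof (induction n)
  case 0 then show ?case by (simp add: pdom_def coeff_1)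
next
  case (Suc n) then show ?case by (simp add: pdom_mult)
qed

lemma pdom_AB: "pdom [:1, -1:] [:1, 1:]"
  unfolding pdom_def
proof
  fix i show "\<bar>coeff [:1, -1::real:] i\<bar> \<le> coeff [:1, 1:] i"
    by (cases i; cases "i - 1") (auto simp: coeff_pCons split: nat.splits)
qed

lemma pdom_B: "pdom [:1, 1:] [:1, 1:]"
  unfolding pdom_def
proof
  fix i show "\<bar>coeff [:1, 1::real:] i\<bar> \<le> coeff [:1, 1:] i"
    by (cases i; cases "i - 1") (auto simp: coeff_pCons split: nat.splits)
qed

lemma Ccol:
  assumes k: "k \<le> N"
  shows "(\<Sum>i\<le>N. \<bar>Cmat N i k\<bar>) \<le> 2 ^ N"
proof -
  have d: "pdom (fpol N k) ([:1, 1:] ^ k * [:1, 1:] ^ (N - k))"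
    unfolding fpol_def by (intro pdom_mult pdom_power pdom_AB pdom_B)
  have e: "[:1, 1::real:] ^ k * [:1, 1:] ^ (N - k) = [:1, 1:] ^ N"
    using k by (simp add: power_add[symmetric])
  have "(\<Sum>i\<le>N. \<bar>Cmat N i k\<bar>) \<le> (\<Sum>i\<le>N. coeff ([:1, 1::real:] ^ N) i * 1 ^ i)"
    using d unfolding e pdom_def Cmat_fpol by (intro sum_mono) auto
  also have "\<dots> = poly ([:1, 1::real:] ^ N) 1"
    by (rule poly_sumN[symmetric]) (rule order.trans[OF degree_power_le], simp)
  also have "\<dots> = 2 ^ N" by simp
  finally show ?thesis .
qed



lemma Cv_lin: "Cv N (\<lambda>i. a * f i + b * g i) k = a * Cv N f k + b * Cv N g k"
  unfolding Cv_def by (simp add: algebra_simps sum.distrib sum_distrib_left)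

lemma Cv_diff: "Cv N (\<lambda>i. f i - g i) k = Cv N f k - Cv N g k"
  unfolding Cv_def by (simp add: algebra_simps sum_subtractf)

lemma Cv_scale: "Cv N (\<lambda>i. a * f i) k = a * Cv N f k"
  unfolding Cv_def by (simp add: algebra_simps sum_distrib_left)

lemma xvec_Cv: "xvec N v k = Cv N v k / 2 ^ N"
  unfolding xvec_def Cv_def by simp

lemma CN: "(\<Sum>k\<le>N. \<bar>Cv N v k\<bar>) \<le> 2 ^ N * (\<Sum>i\<le>N. \<bar>v i\<bar>)"
proof -
  have "(\<Sum>k\<le>N. \<bar>Cv N v k\<bar>) \<le> (\<Sum>k\<le>N. \<Sum>i\<le>N. \<bar>Cmat N k i\<bar> * \<bar>v i\<bar>)"
    unfolding Cv_def by (intro sum_mono order.trans[OF sum_abs]) (simp add: abs_mult)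
  also have "\<dots> = (\<Sum>i\<le>N. \<bar>v i\<bar> * (\<Sum>k\<le>N. \<bar>Cmat N k i\<bar>))"
    by (subst sum.swap) (simp add: sum_distrib_left mult_ac)
  also have "\<dots> \<le> (\<Sum>i\<le>N. \<bar>v i\<bar> * 2 ^ N)"
    by (intro sum_mono mult_left_mono Ccol) auto
  finally show ?thesis by (simp add: sum_distrib_left mult_ac)
qed

lemma XN: "(\<Sum>k\<le>N. \<bar>xvec N v k\<bar>) \<le> (\<Sum>i\<le>N. \<bar>v i\<bar>)"
proof -
  have "(\<Sum>k\<le>N. \<bar>xvec N v k\<bar>) = (\<Sum>k\<le>N. \<bar>Cv N v k\<bar>) / 2 ^ N"
    by (simp add: xvec_Cv sum_divide_distrib)
  also have "\<dots> \<le> (\<Sum>i\<le>N. \<bar>v i\<bar>)"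
    using CN[of N v] by (simp add: divide_le_eq mult_ac)
  finally show ?thesis .
qed

lemma sum_split0: "(\<Sum>k\<le>(N::nat). f k) = f 0 + (\<Sum>k\<in>{1..N}. f k)"
proof -
  have "{..N} = insert 0 {1..N}" by (auto simp: Suc_le_eq)
  then show ?thesis by simp
qed

lemma Cmat_0: "Cmat N 0 k = 1"
  by (simp add: Cmat_fpol coeff_fpol_0)

lemma cauchy_lim:
  fixes f :: "real \<Rightarrow> real"
  assumes r: "r > 0" and c: "c \<ge> 0"
    and H: "\<And>a b. a \<noteq> \<mu> \<Longrightarrow> \<bar>a - \<mu>\<bar> < r \<Longrightarrow> b \<noteq> \<mu> \<Longrightarrow> \<bar>b - \<mu>\<bar> < r
       \<Longrightarrow> \<bar>f a - f b\<bar> \<le> c * (\<bar>a - \<mu>\<bar> + \<bar>b - \<mu>\<bar>)"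
  shows "\<exists>L. (f \<longlongrightarrow> L) (at \<mu>)"
proof -
  have "cauchy_filter (filtermap f (at \<mu>))"
    unfolding cauchy_filter_metric_filtermap
  proof (intro allI impI)
    fix e :: real assume e: "e > 0"
    define d where "d = min r (e / (2 * c + 1))"
    have d: "d > 0" using r e c by (simp add: d_def)
    have "d \<le> e / (2 * c + 1)" by (simp add: d_def)
    then have "(2 * c + 1) * d \<le> (2 * c + 1) * (e / (2 * c + 1))" using c by (intro mult_left_mono) auto
    also have "\<dots> = e" using c by simp
    finally have de: "(2 * c + 1) * d \<le> e" .
    have ev: "eventually (\<lambda>a. a \<noteq> \<mu> \<and> \<bar>a - \<mu>\<bar> < d) (at \<mu>)"
      unfolding eventually_at using d by (auto simp: dist_real_def)
    show "\<exists>P. eventually P (at \<mu>) \<and> (\<forall>a b. P a \<and> P b \<longrightarrow> dist (f a) (f b) < e)"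
    proof (intro exI conjI allI impI)
      show "eventually (\<lambda>a. a \<noteq> \<mu> \<and> \<bar>a - \<mu>\<bar> < d) (at \<mu>)" by (rule ev)
      fix a b assume ab: "(a \<noteq> \<mu> \<and> \<bar>a - \<mu>\<bar> < d) \<and> (b \<noteq> \<mu> \<and> \<bar>b - \<mu>\<bar> < d)"
      have "d \<le> r" by (simp add: d_def)
      then have "\<bar>f a - f b\<bar> \<le> c * (\<bar>a - \<mu>\<bar> + \<bar>b - \<mu>\<bar>)" using ab by (intro H) auto
      also have "\<dots> \<le> c * (2 * d)" using ab c by (intro mult_left_mono) auto
      also have "\<dots> < e" using de d by (simp add: algebra_simps)
      finally show "dist (f a) (f b) < e" by (simp add: dist_real_def)
    qed
  qed
  then have "convergent_filter (filtermap f (at \<mu>))" by (rule cauchy_filter_convergent)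
  then obtain L where "filtermap f (at \<mu>) \<le> nhds L" by (auto simp: convergent_filter_iff)
  then show ?thesis unfolding filterlim_def by blast
qed

locale setting =
  fixes N :: nat and m :: "nat \<Rightarrow> real" and p :: "real \<Rightarrow> nat \<Rightarrow> real"
  assumes N: "N \<ge> 1"
    and hp: "\<And>\<mu>. \<mu> > 0 \<Longrightarrow>
        (\<forall>k\<le>N. 0 < p \<mu> k) \<and> (\<Sum>k\<le>N. p \<mu> k) = 1 \<and>
        (\<forall>i\<le>N. m i * p \<mu> i + \<mu> * (\<Sum>j\<le>N. Qmat N i j * p \<mu> j)
                 = (\<Sum>j\<le>N. m j * p \<mu> j) * p \<mu> i)"
begin

definition "Mn = Mnorm1 N m"
definition "x \<mu> k = xvec N (p \<mu>) k"
definition "mb \<mu> = (\<Sum>j\<le>N. m j * p \<mu> j)"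
definition "s \<mu> = (\<Sum>k\<in>{1..N}. \<bar>x \<mu> k\<bar>)"

lemma m_le: "i \<le> N \<Longrightarrow> \<bar>m i\<bar> \<le> Mn"
  unfolding Mn_def Mnorm1_def by (intro Max_ge) auto

lemma Mn_ge0: "0 \<le> Mn"
  using m_le[of 0] by simp

lemma ppos: "\<mu> > 0 \<Longrightarrow> k \<le> N \<Longrightarrow> 0 < p \<mu> k" using hp by blast
lemma psum: "\<mu> > 0 \<Longrightarrow> (\<Sum>k\<le>N. p \<mu> k) = 1" using hp by blast
lemma peq: "\<mu> > 0 \<Longrightarrow> i \<le> N \<Longrightarrow> m i * p \<mu> i + \<mu> * (\<Sum>j\<le>N. Qmat N i j * p \<mu> j) = mb \<mu> * p \<mu> i"
  using hp unfolding mb_def by blast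

lemma mb_le: "\<mu> > 0 \<Longrightarrow> \<bar>mb \<mu>\<bar> \<le> Mn"
proof -
  assume mu: "\<mu> > 0"
  have "\<bar>mb \<mu>\<bar> \<le> (\<Sum>j\<le>N. \<bar>m j\<bar> * p \<mu> j)"
    unfolding mb_def using ppos[OF mu] by (intro order.trans[OF sum_abs] sum_mono) (simp add: abs_mult abs_of_pos)
  also have "\<dots> \<le> (\<Sum>j\<le>N. Mn * p \<mu> j)"
    using ppos[OF mu] by (intro sum_mono mult_right_mono m_le) (auto intro: less_imp_le)
  also have "\<dots> = Mn" using psum[OF mu] by (simp add: sum_distrib_left[symmetric])
  finally show ?thesis .
qed

lemma x0: "\<mu> > 0 \<Longrightarrow> x \<mu> 0 = 1 / 2 ^ N"
  unfolding x_def xvec_def by (simp add: Cmat_0 psum)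

lemma p_Cx: "\<mu> > 0 \<Longrightarrow> i \<le> N \<Longrightarrow> p \<mu> i = Cv N (x \<mu>) i"
proof -
  assume i: "i \<le> N"
  have "Cv N (x \<mu>) i = Cv N (\<lambda>k. Cv N (p \<mu>) k / 2 ^ N) i"
    unfolding x_def xvec_Cv ..
  also have "\<dots> = p \<mu> i" unfolding Cv_div CC[OF i] by simp
  finally show ?thesis by simp
qed

lemma E1:
  assumes mu: "\<mu> > 0" and k: "k \<le> N"
  shows "xvec N (\<lambda>i. m i * p \<mu> i) k - 2 * real k * \<mu> * x \<mu> k = mb \<mu> * x \<mu> k"
proof -
  have "Cv N (\<lambda>i. 1 * (m i * p \<mu> i) + \<mu> * (\<Sum>j\<le>N. Qmat N i j * p \<mu> j)) k = Cv N (\<lambda>i. mb \<mu> * p \<mu> i) k"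
    using peq[OF mu] by (intro Cv_cong) simp
  then have "Cv N (\<lambda>i. m i * p \<mu> i) k + \<mu> * (- 2 * real k * Cv N (p \<mu>) k) = mb \<mu> * Cv N (p \<mu>) k"
    unfolding Cv_lin Cv_scale CQ[OF k] by simp
  then show ?thesis unfolding xvec_Cv x_def by (simp add: field_simps)
qed

lemma perk:
  fixes k b y A B z C R :: real
  assumes k: "1 \<le> k" and b: "0 < b" and eq: "2 * k * b * y = A - B * z - 2 * k * C - R"
  shows "2 * b * \<bar>y\<bar> \<le> \<bar>A\<bar> + \<bar>B\<bar> * \<bar>z\<bar> + 2 * \<bar>C\<bar> + \<bar>R\<bar>"
proof -
  have "k * (2 * b * \<bar>y\<bar>) = \<bar>2 * k * b * y\<bar>" using k b by (simp add: abs_mult)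
  also have "\<dots> \<le> \<bar>A\<bar> + \<bar>B\<bar> * \<bar>z\<bar> + k * (2 * \<bar>C\<bar>) + \<bar>R\<bar>"
  proof -
    have t: "\<bar>A - P - Q - R\<bar> \<le> \<bar>A\<bar> + \<bar>P\<bar> + \<bar>Q\<bar> + \<bar>R\<bar>" for P Q :: real by arith
    have "\<bar>2 * k * C\<bar> = k * (2 * \<bar>C\<bar>)" using k by (simp add: abs_mult)
    moreover have "\<bar>B * z\<bar> = \<bar>B\<bar> * \<bar>z\<bar>" by (rule abs_mult)
    ultimately show ?thesis unfolding eq using t[of "B * z" "2 * k * C"] by linarith
  qed
  also have "\<dots> \<le> k * (\<bar>A\<bar> + \<bar>B\<bar> * \<bar>z\<bar> + 2 * \<bar>C\<bar> + \<bar>R\<bar>)"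
  proof -
    have "1 * (\<bar>A\<bar> + \<bar>B\<bar> * \<bar>z\<bar> + \<bar>R\<bar>) \<le> k * (\<bar>A\<bar> + \<bar>B\<bar> * \<bar>z\<bar> + \<bar>R\<bar>)"
      using k by (intro mult_right_mono) auto
    then show ?thesis by (simp add: algebra_simps)
  qed
  finally show ?thesis using k by simp
qed

lemma xvec_lin2: "xvec N (\<lambda>i. (m i - c) * (f i - g i)) k
   = xvec N (\<lambda>i. m i * f i) k - xvec N (\<lambda>i. m i * g i) k - c * (xvec N f k - xvec N g k)"
  unfolding xvec_def by (simp add: algebra_simps sum_subtractf sum.distrib sum_distrib_left)

lemma xvec_lin1: "xvec N (\<lambda>i. (m i - c) * f i) k = xvec N (\<lambda>i. m i * f i) k - c * xvec N f k"
  unfolding xvec_def by (simp add: algebra_simps sum_subtractf sum.distrib sum_distrib_left)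

lemma xsum_mn: "(\<Sum>k\<le>N. \<bar>xvec N (\<lambda>i. (m i - c) * u i) k\<bar>) \<le> (Mn + \<bar>c\<bar>) * (\<Sum>i\<le>N. \<bar>u i\<bar>)"
proof -
  have "(\<Sum>k\<le>N. \<bar>xvec N (\<lambda>i. (m i - c) * u i) k\<bar>) \<le> (\<Sum>i\<le>N. \<bar>(m i - c) * u i\<bar>)"
    by (rule XN)
  also have "\<dots> \<le> (\<Sum>i\<le>N. (Mn + \<bar>c\<bar>) * \<bar>u i\<bar>)"
  proof (intro sum_mono)
    fix i assume "i \<in> {..N}"
    then have "\<bar>m i - c\<bar> \<le> Mn + \<bar>c\<bar>" using m_le[of i] by auto
    then show "\<bar>(m i - c) * u i\<bar> \<le> (Mn + \<bar>c\<bar>) * \<bar>u i\<bar>"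
      unfolding abs_mult by (rule mult_right_mono) auto
  qed
  finally show ?thesis by (simp add: sum_distrib_left)
qed

lemma msum_le: "\<bar>\<Sum>i\<le>N. m i * u i\<bar> \<le> Mn * (\<Sum>i\<le>N. \<bar>u i\<bar>)"
proof -
  have "\<bar>\<Sum>i\<le>N. m i * u i\<bar> \<le> (\<Sum>i\<le>N. \<bar>m i\<bar> * \<bar>u i\<bar>)"
    by (rule order.trans[OF sum_abs]) (simp add: abs_mult)
  also have "\<dots> \<le> (\<Sum>i\<le>N. Mn * \<bar>u i\<bar>)"
    by (intro sum_mono mult_right_mono m_le) auto
  finally show ?thesis by (simp add: sum_distrib_left)
qed

lemma s_bound:
  assumes mu: "\<mu> > 0" shows "s \<mu> \<le> Mn / \<mu>"
proof -
  define X where "X k = xvec N (\<lambda>i. (m i - mb \<mu>) * p \<mu> i) k" for k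
  have xk: "\<bar>x \<mu> k\<bar> \<le> \<bar>X k\<bar> / (2 * \<mu>)" if k: "k \<in> {1..N}" for k
  proof -
    have "2 * real k * \<mu> * x \<mu> k = X k"
      using E1[OF mu, of k] k unfolding X_def xvec_lin1 x_def by simp
    then have "\<bar>X k\<bar> = \<bar>2 * real k * \<mu>\<bar> * \<bar>x \<mu> k\<bar>" by (metis abs_mult)
    also have "\<bar>2 * real k * \<mu>\<bar> = 2 * real k * \<mu>" using mu by simp
    finally have "real k * (2 * \<mu> * \<bar>x \<mu> k\<bar>) = \<bar>X k\<bar>" by (simp add: mult_ac)
    moreover have "1 \<le> real k" using k by simp
    moreover have "0 \<le> 2 * \<mu> * \<bar>x \<mu> k\<bar>" using mu by simp
    ultimately have "2 * \<mu> * \<bar>x \<mu> k\<bar> \<le> \<bar>X k\<bar>"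
      using mult_right_mono[of 1 "real k" "2 * \<mu> * \<bar>x \<mu> k\<bar>"] by simp
    then show ?thesis using mu by (simp add: field_simps)
  qed
  have "s \<mu> \<le> (\<Sum>k\<in>{1..N}. \<bar>X k\<bar> / (2 * \<mu>))"
    unfolding s_def by (intro sum_mono xk)
  also have "\<dots> \<le> (\<Sum>k\<le>N. \<bar>X k\<bar>) / (2 * \<mu>)"
    unfolding sum_divide_distrib[symmetric] using mu
    by (intro divide_right_mono sum_mono2) auto
  also have "\<dots> \<le> ((Mn + \<bar>mb \<mu>\<bar>) * (\<Sum>i\<le>N. \<bar>p \<mu> i\<bar>)) / (2 * \<mu>)"
    unfolding X_def using mu by (intro divide_right_mono xsum_mn) auto
  also have "(\<Sum>i\<le>N. \<bar>p \<mu> i\<bar>) = 1"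
    using psum[OF mu] ppos[OF mu] by (simp add: abs_of_pos)
  also have "(Mn + \<bar>mb \<mu>\<bar>) * 1 / (2 * \<mu>) \<le> (2 * Mn) / (2 * \<mu>)"
    using mb_le[OF mu] mu by (intro divide_right_mono) auto
  finally show ?thesis using mu by simp
qed

lemma GEN:
  fixes y u z C R :: "nat \<Rightarrow> real" and b c :: real
  assumes b: "0 < b" and hc: "\<bar>c\<bar> \<le> Mn"
    and hu: "(\<Sum>i\<le>N. \<bar>u i\<bar>) \<le> 2 ^ N * (\<Sum>k\<in>{1..N}. \<bar>y k\<bar>)"
    and hz: "2 ^ N * Mn * (\<Sum>k\<in>{1..N}. \<bar>z k\<bar>) \<le> Mn"
    and eq: "\<And>k. k \<in> {1..N} \<Longrightarrow> 2 * real k * b * y k = xvec N (\<lambda>i. (m i - c) * u i) k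
        - (\<Sum>i\<le>N. m i * u i) * z k - 2 * real k * C k - R k"
  shows "(2 * b - (2 ^ (N + 1) + 1) * Mn) * (\<Sum>k\<in>{1..N}. \<bar>y k\<bar>)
     \<le> 2 * (\<Sum>k\<in>{1..N}. \<bar>C k\<bar>) + (\<Sum>k\<in>{1..N}. \<bar>R k\<bar>)"
proof -
  define Y where "Y = (\<Sum>k\<in>{1..N}. \<bar>y k\<bar>)"
  define Z where "Z = (\<Sum>k\<in>{1..N}. \<bar>z k\<bar>)"
  define U where "U = (\<Sum>i\<le>N. \<bar>u i\<bar>)"
  define B where "B = (\<Sum>i\<le>N. m i * u i)"
  define X where "X k = xvec N (\<lambda>i. (m i - c) * u i) k" for k
  have pk: "2 * b * \<bar>y k\<bar> \<le> \<bar>X k\<bar> + \<bar>B\<bar> * \<bar>z k\<bar> + 2 * \<bar>C k\<bar> + \<bar>R k\<bar>" if "k \<in> {1..N}" for k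
    using that by (intro perk[of "real k", OF _ b]) (auto simp: eq X_def B_def)
  have "2 * b * Y \<le> (\<Sum>k\<in>{1..N}. \<bar>X k\<bar> + \<bar>B\<bar> * \<bar>z k\<bar> + 2 * \<bar>C k\<bar> + \<bar>R k\<bar>)"
    unfolding Y_def sum_distrib_left by (intro sum_mono pk)
  also have "\<dots> = (\<Sum>k\<in>{1..N}. \<bar>X k\<bar>) + \<bar>B\<bar> * Z + 2 * (\<Sum>k\<in>{1..N}. \<bar>C k\<bar>) + (\<Sum>k\<in>{1..N}. \<bar>R k\<bar>)"
    by (simp add: Z_def sum.distrib sum_distrib_left)
  finally have 1: "2 * b * Y \<le> (\<Sum>k\<in>{1..N}. \<bar>X k\<bar>) + \<bar>B\<bar> * Z + 2 * (\<Sum>k\<in>{1..N}. \<bar>C k\<bar>) + (\<Sum>k\<in>{1..N}. \<bar>R k\<bar>)" .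
  have "(\<Sum>k\<in>{1..N}. \<bar>X k\<bar>) \<le> (\<Sum>k\<le>N. \<bar>X k\<bar>)" by (intro sum_mono2) auto
  also have "\<dots> \<le> (Mn + \<bar>c\<bar>) * U" unfolding X_def U_def by (rule xsum_mn)
  also have "\<dots> \<le> (2 * Mn) * (2 ^ N * Y)"
    using hc hu unfolding U_def Y_def by (intro mult_mono) (auto intro: sum_nonneg)
  finally have 2: "(\<Sum>k\<in>{1..N}. \<bar>X k\<bar>) \<le> 2 * Mn * (2 ^ N * Y)" .
  have "\<bar>B\<bar> * Z \<le> (Mn * (2 ^ N * Y)) * Z"
    unfolding B_def using msum_le[of u] hu Mn_ge0 unfolding U_def Y_def Z_def
    by (intro mult_right_mono) (auto intro: sum_nonneg order.trans mult_left_mono)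
  also have "\<dots> = Y * (2 ^ N * Mn * Z)" by (simp add: mult_ac)
  also have "\<dots> \<le> Y * Mn" using hz unfolding Z_def Y_def by (intro mult_left_mono) (auto intro: sum_nonneg)
  finally have 3: "\<bar>B\<bar> * Z \<le> Y * Mn" .
  have "(2 * b - (2 ^ (N + 1) + 1) * Mn) * Y = 2 * b * Y - 2 * Mn * (2 ^ N * Y) - Y * Mn"
    by (simp add: algebra_simps)
  then show ?thesis using 1 2 3 unfolding Y_def by linarith
qed

lemma part1: "\<mu> > 0 \<Longrightarrow> norm1 N (\<lambda>i. xvec N (p \<mu>) i - xhat N i) \<le> Mnorm1 N m / \<mu>"
proof -
  assume mu: "\<mu> > 0"
  have "norm1 N (\<lambda>i. xvec N (p \<mu>) i - xhat N i) = s \<mu>"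
    unfolding norm1_def sum_split0[of _ N] s_def using x0[OF mu]
    by (simp add: xhat_def x_def)
  then show ?thesis using s_bound[OF mu] by (simp add: Mn_def)
qed

definition "K = (2 ^ (N + 1) + 1) * Mn"
definition "D a b = (\<Sum>k\<in>{1..N}. \<bar>x a k - x b k\<bar>)"

lemma inU: assumes "K < 2 * a" shows "0 < a" "2 ^ N * Mn \<le> a"
proof -
  have "2 * (2 ^ N * Mn) \<le> K" unfolding K_def using Mn_ge0 by (simp add: algebra_simps)
  moreover have "0 \<le> 2 ^ N * Mn" using Mn_ge0 by simp
  ultimately show "0 < a" "2 ^ N * Mn \<le> a" using assms by linarith+
qed

lemma hz_ok: assumes a: "K < 2 * a" shows "2 ^ N * Mn * s a \<le> Mn" "s a \<le> 1"
proof -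
  have a0: "0 < a" and aM: "2 ^ N * Mn \<le> a" using inU[OF a] by auto
  have sa: "s a \<le> Mn / a" by (rule s_bound[OF a0])
  have "2 ^ N * Mn * s a \<le> 2 ^ N * Mn * (Mn / a)"
    using sa Mn_ge0 by (intro mult_left_mono) auto
  also have "\<dots> = Mn * (2 ^ N * Mn / a)" by simp
  also have "\<dots> \<le> Mn * 1" using aM a0 Mn_ge0 by (intro mult_left_mono) auto
  finally show "2 ^ N * Mn * s a \<le> Mn" by simp
  have "1 * Mn \<le> 2 ^ N * Mn" using Mn_ge0 by (intro mult_right_mono) auto
  then have "Mn / a \<le> 1" using aM a0 by simp
  then show "s a \<le> 1" using sa by simp
qed

lemma diffid:
  assumes a: "0 < a" and b: "0 < b" and k: "k \<le> N"
  shows "2 * real k * b * (x a k - x b k) = xvec N (\<lambda>i. (m i - mb b) * (p a i - p b i)) k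
      - (\<Sum>i\<le>N. m i * (p a i - p b i)) * x a k - 2 * real k * ((a - b) * x a k) - 0"
proof -
  have ms: "(\<Sum>i\<le>N. m i * (p a i - p b i)) = mb a - mb b"
    unfolding mb_def by (simp add: right_diff_distrib sum_subtractf)
  have l: "xvec N (\<lambda>i. (m i - mb b) * (p a i - p b i)) k
      = xvec N (\<lambda>i. m i * p a i) k - xvec N (\<lambda>i. m i * p b i) k - mb b * (x a k - x b k)"
    unfolding xvec_lin2 x_def ..
  show ?thesis unfolding l ms using E1[OF a k] E1[OF b k]
    by (simp add: algebra_simps)
qed

lemma unorm:
  assumes a: "0 < a" and b: "0 < b"
  shows "(\<Sum>i\<le>N. \<bar>p a i - p b i\<bar>) \<le> 2 ^ N * D a b"
proof -
  have "(\<Sum>i\<le>N. \<bar>p a i - p b i\<bar>) = (\<Sum>i\<le>N. \<bar>Cv N (\<lambda>k. x a k - x b k) i\<bar>)"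
    using p_Cx[OF a] p_Cx[OF b] by (intro sum.cong) (auto simp: Cv_diff)
  also have "\<dots> \<le> 2 ^ N * (\<Sum>k\<le>N. \<bar>x a k - x b k\<bar>)" by (rule CN)
  also have "(\<Sum>k\<le>N. \<bar>x a k - x b k\<bar>) = D a b"
    unfolding sum_split0[of _ N] D_def using x0[OF a] x0[OF b] by simp
  finally show ?thesis .
qed

lemma lip:
  assumes a: "K < 2 * a" and b: "K < 2 * b"
  shows "(2 * b - K) * D a b \<le> 2 * \<bar>a - b\<bar>"
proof -
  have a0: "0 < a" and b0: "0 < b" using inU a b by auto
  have "(2 * b - K) * D a b \<le> 2 * (\<Sum>k\<in>{1..N}. \<bar>(a - b) * x a k\<bar>) + (\<Sum>k\<in>{1..N}. \<bar>0::real\<bar>)"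
    unfolding K_def D_def
  proof (rule GEN[where u = "\<lambda>i. p a i - p b i" and z = "x a" and c = "mb b"])
    show "0 < b" by (rule b0)
    show "\<bar>mb b\<bar> \<le> Mn" by (rule mb_le[OF b0])
    show "(\<Sum>i\<le>N. \<bar>p a i - p b i\<bar>) \<le> 2 ^ N * (\<Sum>k\<in>{1..N}. \<bar>x a k - x b k\<bar>)"
      using unorm[OF a0 b0] unfolding D_def .
    show "2 ^ N * Mn * (\<Sum>k\<in>{1..N}. \<bar>x a k\<bar>) \<le> Mn" using hz_ok[OF a] unfolding s_def by simp
    fix k assume "k \<in> {1..N}"
    then show "2 * real k * b * (x a k - x b k) = xvec N (\<lambda>i. (m i - mb b) * (p a i - p b i)) k
      - (\<Sum>i\<le>N. m i * (p a i - p b i)) * x a k - 2 * real k * ((a - b) * x a k) - 0"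
      using diffid[OF a0 b0] by simp
  qed
  also have "\<dots> = 2 * \<bar>a - b\<bar> * s a" unfolding s_def by (simp add: abs_mult sum_distrib_left mult.assoc)
  also have "\<dots> \<le> 2 * \<bar>a - b\<bar> * 1" using hz_ok(2)[OF a] by (intro mult_left_mono) auto
  finally show ?thesis by simp
qed

end


context setting begin

definition "q \<mu>0 \<nu> k = (x \<nu> k - x \<mu>0 k) / (\<nu> - \<mu>0)"
definition "E \<mu>0 \<nu> i = (p \<nu> i - p \<mu>0 i) / (\<nu> - \<mu>0)"

lemma xvec_div: "xvec N (\<lambda>i. (m i - c) * (f i / h)) k = xvec N (\<lambda>i. (m i - c) * f i) k / h"
  unfolding xvec_def by (simp add: sum_divide_distrib[symmetric])

lemma xvec_sub: "xvec N (\<lambda>i. (m i - c) * (f i - g i)) k = xvec N (\<lambda>i. (m i - c) * f i) k - xvec N (\<lambda>i. (m i - c) * g i) k"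
proof -
  have "(\<lambda>i. (m i - c) * (f i - g i)) = (\<lambda>i. (m i - c) * f i - (m i - c) * g i)"
    by (simp add: right_diff_distrib)
  then show ?thesis by (simp add: xvec_Cv Cv_diff diff_divide_distrib)
qed

lemma div_lemma: "(h::real) \<noteq> 0 \<Longrightarrow> (A - B * z - 2 * k * (h * z) - 0) / h = A / h - (B / h) * z - 2 * k * z"
  by (simp add: field_simps)

lemma arith1:
  fixes k mu qa qb Xa Xb Sa Sb xa xb :: real
  shows "2 * k * mu * qa = Xa - Sa * xa - 2 * k * xa \<Longrightarrow> 2 * k * mu * qb = Xb - Sb * xb - 2 * k * xb
   \<Longrightarrow> 2 * k * mu * (qa - qb) = (Xa - Xb) - (Sa - Sb) * xa - 2 * k * (xa - xb) - Sb * (xa - xb)"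
  by (simp add: algebra_simps)

lemma DI:
  assumes a: "0 < a" and b: "0 < b" and ab: "a \<noteq> b" and k: "k \<le> N"
  shows "2 * real k * b * q b a k = xvec N (\<lambda>i. (m i - mb b) * E b a i) k
      - (\<Sum>i\<le>N. m i * E b a i) * x a k - 2 * real k * x a k"
proof -
  have h: "a - b \<noteq> 0" using ab by simp
  have ms: "(\<Sum>i\<le>N. m i * E b a i) = (\<Sum>i\<le>N. m i * (p a i - p b i)) / (a - b)"
    unfolding E_def by (simp add: sum_divide_distrib)
  have ms2: "(\<Sum>i\<le>N. m i * ((p a i - p b i) / (a - b))) = (\<Sum>i\<le>N. m i * (p a i - p b i)) / (a - b)"
    by (simp add: sum_divide_distrib)
  have e: "2 * real k * b * (x a k - x b k) = xvec N (\<lambda>i. (m i - mb b) * (p a i - p b i)) k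
      - (\<Sum>i\<le>N. m i * (p a i - p b i)) * x a k - 2 * real k * ((a - b) * x a k) - 0"
    by (rule diffid[OF a b k])
  have "2 * real k * b * q b a k = (2 * real k * b * (x a k - x b k)) / (a - b)"
    unfolding q_def by simp
  also have "\<dots> = xvec N (\<lambda>i. (m i - mb b) * (p a i - p b i)) k / (a - b)
      - ((\<Sum>i\<le>N. m i * (p a i - p b i)) / (a - b)) * x a k - 2 * real k * x a k"
    unfolding e using div_lemma[OF h] by simp
  also have "\<dots> = xvec N (\<lambda>i. (m i - mb b) * E b a i) k
      - (\<Sum>i\<le>N. m i * E b a i) * x a k - 2 * real k * x a k"
    unfolding E_def xvec_div ms2 ..
  finally show ?thesis .
qed

lemma q0: "0 < a \<Longrightarrow> 0 < b \<Longrightarrow> q b a 0 = 0"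
  unfolding q_def by (simp add: x0)

lemma E_Cv:
  assumes a: "0 < a" and b: "0 < b" and i: "i \<le> N" shows "E b a i = Cv N (q b a) i"
proof -
  have "Cv N (q b a) i = Cv N (\<lambda>k. x a k - x b k) i / (a - b)" unfolding q_def by (rule Cv_div)
  also have "\<dots> = (p a i - p b i) / (a - b)" using p_Cx[OF a i] p_Cx[OF b i] by (simp add: Cv_diff)
  finally show ?thesis unfolding E_def by simp
qed

lemma qsum_bound:
  assumes a: "K < 2 * a" and b: "K < 2 * b" and ab: "a \<noteq> b"
  shows "(\<Sum>k\<in>{1..N}. \<bar>q b a k\<bar>) \<le> 2 / (2 * b - K)"
proof -
  have g: "0 < 2 * b - K" using b by simp
  have "(\<Sum>k\<in>{1..N}. \<bar>q b a k\<bar>) = D a b / \<bar>a - b\<bar>"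
    unfolding q_def D_def by (simp add: sum_divide_distrib abs_divide)
  also have "\<dots> \<le> 2 / (2 * b - K)"
  proof -
    have h: "0 < \<bar>a - b\<bar>" using ab by simp
    have "D a b \<le> 2 * \<bar>a - b\<bar> / (2 * b - K)"
      using lip[OF a b] g by (simp add: pos_le_divide_eq mult.commute)
    then show ?thesis using h by (simp add: pos_divide_le_eq)
  qed
  finally show ?thesis .
qed

lemma Esum_bound:
  assumes a: "0 < a" and b: "0 < b"
  shows "(\<Sum>i\<le>N. \<bar>E b a i\<bar>) \<le> 2 ^ N * (\<Sum>k\<in>{1..N}. \<bar>q b a k\<bar>)"
proof -
  have "(\<Sum>i\<le>N. \<bar>E b a i\<bar>) = (\<Sum>i\<le>N. \<bar>Cv N (q b a) i\<bar>)"
    using E_Cv[OF a b] by (intro sum.cong) auto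
  also have "\<dots> \<le> 2 ^ N * (\<Sum>k\<le>N. \<bar>q b a k\<bar>)" by (rule CN)
  finally show ?thesis unfolding sum_split0[of _ N] using q0[OF a b] by simp
qed

lemma qcauchy:
  assumes mu: "K < 2 * \<mu>0" and a: "K < 2 * a" and b: "K < 2 * b"
    and am: "a \<noteq> \<mu>0" and bm: "b \<noteq> \<mu>0"
  shows "(2 * \<mu>0 - K) * (\<Sum>k\<in>{1..N}. \<bar>q \<mu>0 a k - q \<mu>0 b k\<bar>)
     \<le> (2 + Mn * 2 ^ N * (2 / (2 * \<mu>0 - K))) * D a b"
proof -
  have a0: "0 < a" and b0: "0 < b" and m0: "0 < \<mu>0" using inU a b mu by auto
  define SB where "SB = (\<Sum>i\<le>N. m i * E \<mu>0 b i)"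
  have "(2 * \<mu>0 - K) * (\<Sum>k\<in>{1..N}. \<bar>q \<mu>0 a k - q \<mu>0 b k\<bar>)
     \<le> 2 * (\<Sum>k\<in>{1..N}. \<bar>x a k - x b k\<bar>) + (\<Sum>k\<in>{1..N}. \<bar>SB * (x a k - x b k)\<bar>)"
    unfolding K_def
  proof (rule GEN[where u = "\<lambda>i. E \<mu>0 a i - E \<mu>0 b i" and z = "x a" and c = "mb \<mu>0"])
    show "0 < \<mu>0" by (rule m0)
    show "\<bar>mb \<mu>0\<bar> \<le> Mn" by (rule mb_le[OF m0])
    have "(\<Sum>i\<le>N. \<bar>E \<mu>0 a i - E \<mu>0 b i\<bar>) = (\<Sum>i\<le>N. \<bar>Cv N (\<lambda>k. q \<mu>0 a k - q \<mu>0 b k) i\<bar>)"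
      using E_Cv[OF a0 m0] E_Cv[OF b0 m0] by (intro sum.cong) (auto simp: Cv_diff)
    also have "\<dots> \<le> 2 ^ N * (\<Sum>k\<le>N. \<bar>q \<mu>0 a k - q \<mu>0 b k\<bar>)" by (rule CN)
    finally show "(\<Sum>i\<le>N. \<bar>E \<mu>0 a i - E \<mu>0 b i\<bar>) \<le> 2 ^ N * (\<Sum>k\<in>{1..N}. \<bar>q \<mu>0 a k - q \<mu>0 b k\<bar>)"
      unfolding sum_split0[of _ N] using q0[OF a0 m0] q0[OF b0 m0] by simp
    show "2 ^ N * Mn * (\<Sum>k\<in>{1..N}. \<bar>x a k\<bar>) \<le> Mn" using hz_ok[OF a] unfolding s_def by simp
    fix k assume k: "k \<in> {1..N}"
    have da: "2 * real k * \<mu>0 * q \<mu>0 a k = xvec N (\<lambda>i. (m i - mb \<mu>0) * E \<mu>0 a i) k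
      - (\<Sum>i\<le>N. m i * E \<mu>0 a i) * x a k - 2 * real k * x a k"
      by (rule DI[OF a0 m0 am]) (use k in simp)
    have db: "2 * real k * \<mu>0 * q \<mu>0 b k = xvec N (\<lambda>i. (m i - mb \<mu>0) * E \<mu>0 b i) k
      - (\<Sum>i\<le>N. m i * E \<mu>0 b i) * x b k - 2 * real k * x b k"
      by (rule DI[OF b0 m0 bm]) (use k in simp)
    have ms: "(\<Sum>i\<le>N. m i * (E \<mu>0 a i - E \<mu>0 b i)) = (\<Sum>i\<le>N. m i * E \<mu>0 a i) - SB"
      unfolding SB_def by (simp add: right_diff_distrib sum_subtractf)
    show "2 * real k * \<mu>0 * (q \<mu>0 a k - q \<mu>0 b k) = xvec N (\<lambda>i. (m i - mb \<mu>0) * (E \<mu>0 a i - E \<mu>0 b i)) k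
      - (\<Sum>i\<le>N. m i * (E \<mu>0 a i - E \<mu>0 b i)) * x a k - 2 * real k * (x a k - x b k)
      - SB * (x a k - x b k)"
      unfolding xvec_sub ms SB_def by (rule arith1[OF da db])
  qed
  also have "\<dots> = (2 + \<bar>SB\<bar>) * D a b"
    unfolding D_def by (simp add: abs_mult sum_distrib_left[symmetric] distrib_right)
  also have "\<dots> \<le> (2 + Mn * 2 ^ N * (2 / (2 * \<mu>0 - K))) * D a b"
  proof (intro mult_right_mono)
    have "\<bar>SB\<bar> \<le> Mn * (\<Sum>i\<le>N. \<bar>E \<mu>0 b i\<bar>)" unfolding SB_def by (rule msum_le)
    also have "\<dots> \<le> Mn * (2 ^ N * (2 / (2 * \<mu>0 - K)))"
    proof (intro mult_left_mono Mn_ge0)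
      have "2 ^ N * (\<Sum>k\<in>{1..N}. \<bar>q \<mu>0 b k\<bar>) \<le> 2 ^ N * (2 / (2 * \<mu>0 - K))"
        using qsum_bound[OF b mu bm] by (intro mult_left_mono) auto
      then show "(\<Sum>i\<le>N. \<bar>E \<mu>0 b i\<bar>) \<le> 2 ^ N * (2 / (2 * \<mu>0 - K))"
        using Esum_bound[OF b0 m0] by linarith
    qed
    finally show "2 + \<bar>SB\<bar> \<le> 2 + Mn * 2 ^ N * (2 / (2 * \<mu>0 - K))" by (simp add: mult_ac)
    show "0 \<le> D a b" unfolding D_def by (auto intro: sum_nonneg)
  qed
  finally show ?thesis .
qed

lemma near:
  assumes mu: "K < 2 * \<mu>0" and a: "\<bar>a - \<mu>0\<bar> < (2 * \<mu>0 - K) / 4"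
  shows "K < 2 * a"
proof -
  have "\<mu>0 - a \<le> \<bar>a - \<mu>0\<bar>" by linarith
  then show ?thesis using mu a by (simp add: field_simps)
qed

lemma Dtri: "D a b \<le> D a c + D b c"
  unfolding D_def sum.distrib[symmetric] by (intro sum_mono) auto

lemma deriv_main:
  assumes mu: "K < 2 * \<mu>0"
  shows "\<exists>L. (\<forall>k\<le>N. ((\<lambda>\<nu>. x \<nu> k) has_field_derivative L k) (at \<mu>0))
            \<and> (\<Sum>k\<le>N. \<bar>L k\<bar>) \<le> 2 / (2 * \<mu>0 - K)"
proof -
  define g where "g = 2 * \<mu>0 - K"
  have g: "0 < g" using mu by (simp add: g_def)
  define r where "r = g / 4"
  have r: "0 < r" using g by (simp add: r_def)
  have m0: "0 < \<mu>0" using inU[OF mu] by simp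
  define c2 where "c2 = 2 + Mn * 2 ^ N * (2 / g)"
  have c2: "0 \<le> c2" using Mn_ge0 g by (simp add: c2_def)
  define c where "c = c2 * 2 / (g * g)"
  have c: "0 \<le> c" using c2 g by (simp add: c_def)
  have Dnear: "D a \<mu>0 \<le> 2 * \<bar>a - \<mu>0\<bar> / g" if "K < 2 * a" for a
    using lip[OF that mu] g by (simp add: g_def pos_le_divide_eq mult.commute)
  have W: "(\<Sum>k\<in>{1..N}. \<bar>q \<mu>0 a k - q \<mu>0 b k\<bar>) \<le> c * (\<bar>a - \<mu>0\<bar> + \<bar>b - \<mu>0\<bar>)"
    if a: "K < 2 * a" and b: "K < 2 * b" and am: "a \<noteq> \<mu>0" and bm: "b \<noteq> \<mu>0" for a b
  proof -
    have "g * (\<Sum>k\<in>{1..N}. \<bar>q \<mu>0 a k - q \<mu>0 b k\<bar>) \<le> c2 * D a b"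
      using qcauchy[OF mu a b am bm] unfolding g_def c2_def .
    also have "\<dots> \<le> c2 * (2 * \<bar>a - \<mu>0\<bar> / g + 2 * \<bar>b - \<mu>0\<bar> / g)"
      using Dtri[of a b \<mu>0] Dnear[OF a] Dnear[OF b] c2 by (intro mult_left_mono) auto
    also have "\<dots> = g * (c * (\<bar>a - \<mu>0\<bar> + \<bar>b - \<mu>0\<bar>))"
      using g by (simp add: c_def field_simps)
    finally show ?thesis using g by simp
  qed
  have Hk: "\<bar>q \<mu>0 a k - q \<mu>0 b k\<bar> \<le> c * (\<bar>a - \<mu>0\<bar> + \<bar>b - \<mu>0\<bar>)"
    if k: "k \<le> N" and a: "a \<noteq> \<mu>0" "\<bar>a - \<mu>0\<bar> < r" and b: "b \<noteq> \<mu>0" "\<bar>b - \<mu>0\<bar> < r" for k a b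
  proof -
    have a': "K < 2 * a" and b': "K < 2 * b" using near[OF mu] a b by (auto simp: r_def g_def)
    show ?thesis
    proof (cases "k = 0")
      case True
      then show ?thesis using q0 inU[OF a'] inU[OF b'] m0 c by simp
    next
      case False
      then have "k \<in> {1..N}" using k by simp
      then have "\<bar>q \<mu>0 a k - q \<mu>0 b k\<bar> \<le> (\<Sum>k\<in>{1..N}. \<bar>q \<mu>0 a k - q \<mu>0 b k\<bar>)"
        by (intro member_le_sum) auto
      also have "\<dots> \<le> c * (\<bar>a - \<mu>0\<bar> + \<bar>b - \<mu>0\<bar>)" using W[OF a' b' a(1) b(1)] .
      finally show ?thesis .
    qed
  qed
  have ex: "\<exists>L. ((\<lambda>\<nu>. q \<mu>0 \<nu> k) \<longlongrightarrow> L) (at \<mu>0)" if k: "k \<le> N" for k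
    using r c by (rule cauchy_lim) (rule Hk[OF k], auto)
  define L where "L k = (SOME L. ((\<lambda>\<nu>. q \<mu>0 \<nu> k) \<longlongrightarrow> L) (at \<mu>0))" for k
  have lim: "((\<lambda>\<nu>. q \<mu>0 \<nu> k) \<longlongrightarrow> L k) (at \<mu>0)" if "k \<le> N" for k
    unfolding L_def using ex[OF that] by (rule someI_ex)
  have der: "((\<lambda>\<nu>. x \<nu> k) has_field_derivative L k) (at \<mu>0)" if "k \<le> N" for k
    unfolding has_field_derivative_iff using lim[OF that] unfolding q_def .
  have "((\<lambda>\<nu>. \<Sum>k\<le>N. \<bar>q \<mu>0 \<nu> k\<bar>) \<longlongrightarrow> (\<Sum>k\<le>N. \<bar>L k\<bar>)) (at \<mu>0)"
    by (intro tendsto_sum tendsto_rabs lim) auto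
  moreover have "eventually (\<lambda>\<nu>. (\<Sum>k\<le>N. \<bar>q \<mu>0 \<nu> k\<bar>) \<le> 2 / g) (at \<mu>0)"
    unfolding eventually_at
  proof (intro exI[of _ r] conjI r ballI impI)
    fix a assume a: "a \<in> UNIV" "a \<noteq> \<mu>0 \<and> dist a \<mu>0 < r"
    then have a': "K < 2 * a" using near[OF mu] by (auto simp: r_def g_def dist_real_def)
    have "(\<Sum>k\<le>N. \<bar>q \<mu>0 a k\<bar>) = (\<Sum>k\<in>{1..N}. \<bar>q \<mu>0 a k\<bar>)"
      unfolding sum_split0[of _ N] using q0 inU[OF a'] m0 by simp
    also have "\<dots> \<le> 2 / g" unfolding g_def using qsum_bound[OF a' mu] a by simp
    finally show "(\<Sum>k\<le>N. \<bar>q \<mu>0 a k\<bar>) \<le> 2 / g" .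
  qed
  ultimately have "(\<Sum>k\<le>N. \<bar>L k\<bar>) \<le> 2 / g"
    by (intro tendsto_upperbound) auto
  then show ?thesis using der unfolding g_def by blast
qed

end


context setting begin

lemma part2:
  assumes mu: "2 * \<mu> > (2 ^ (N + 1) + 1) * Mnorm1 N m"
  shows "(\<forall>k\<le>N. (\<lambda>\<nu>. xvec N (p \<nu>) k) differentiable (at \<mu>)) \<and>
          norm1 N (\<lambda>k. deriv (\<lambda>\<nu>. xvec N (p \<nu>) k) \<mu>)
            \<le> 2 * real N / (2 * \<mu> - (2 ^ (N + 1) + 1) * Mnorm1 N m)"
proof -
  have mu': "K < 2 * \<mu>" using mu by (simp add: K_def Mn_def)
  obtain L where L: "\<And>k. k \<le> N \<Longrightarrow> ((\<lambda>\<nu>. x \<nu> k) has_field_derivative L k) (at \<mu>)"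
    and Lb: "(\<Sum>k\<le>N. \<bar>L k\<bar>) \<le> 2 / (2 * \<mu> - K)"
    using deriv_main[OF mu'] by blast
  have xe: "(\<lambda>\<nu>. xvec N (p \<nu>) k) = (\<lambda>\<nu>. x \<nu> k)" for k by (simp add: x_def)
  have diff: "\<forall>k\<le>N. (\<lambda>\<nu>. xvec N (p \<nu>) k) differentiable (at \<mu>)"
    unfolding xe using L by (auto intro: differentiableI has_field_derivative_imp_has_derivative)
  have "norm1 N (\<lambda>k. deriv (\<lambda>\<nu>. xvec N (p \<nu>) k) \<mu>) = (\<Sum>k\<le>N. \<bar>L k\<bar>)"
    unfolding norm1_def xe using L by (intro sum.cong refl) (simp add: DERIV_imp_deriv[OF L])
  also have "\<dots> \<le> 2 / (2 * \<mu> - K)" by (rule Lb)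
  also have "\<dots> \<le> 2 * real N / (2 * \<mu> - K)"
    using N mu' by (intro divide_right_mono) auto
  finally show ?thesis using diff by (simp add: K_def Mn_def)
qed

lemma lim1:
  assumes k: "k \<le> N"
  shows "((\<lambda>\<mu>. xvec N (p \<mu>) k) \<longlongrightarrow> xhat N k) at_top"
proof -
  have "((\<lambda>\<mu>. xvec N (p \<mu>) k - xhat N k) \<longlongrightarrow> 0) at_top"
  proof (rule Lim_null_comparison)
    show "eventually (\<lambda>\<mu>. norm (xvec N (p \<mu>) k - xhat N k) \<le> Mn / \<mu>) at_top"
      using eventually_gt_at_top[of 0]
    proof eventually_elim
      case (elim \<mu>)
      have "\<bar>xvec N (p \<mu>) k - xhat N k\<bar> \<le> (\<Sum>i\<le>N. \<bar>xvec N (p \<mu>) i - xhat N i\<bar>)"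
        by (rule member_le_sum) (use k in auto)
      then have "norm (xvec N (p \<mu>) k - xhat N k) \<le> norm1 N (\<lambda>i. xvec N (p \<mu>) i - xhat N i)"
        unfolding norm1_def by simp
      also have "\<dots> \<le> Mn / \<mu>" using part1[OF elim] by (simp add: Mn_def)
      finally show ?case .
    qed
    show "((\<lambda>\<mu>. Mn / \<mu>) \<longlongrightarrow> 0) at_top"
      by (rule tendsto_divide_0[OF tendsto_const filterlim_at_top_imp_at_infinity[OF filterlim_ident]])
  qed
  then show ?thesis by (simp add: LIM_zero_iff)
qed

lemma lim2:
  assumes k: "k \<le> N"
  shows "((\<lambda>\<mu>. deriv (\<lambda>\<nu>. xvec N (p \<nu>) k) \<mu>) \<longlongrightarrow> 0) at_top"
proof (rule Lim_null_comparison)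
  show "eventually (\<lambda>\<mu>. norm (deriv (\<lambda>\<nu>. xvec N (p \<nu>) k) \<mu>) \<le> 2 * real N / (2 * \<mu> - K)) at_top"
    using eventually_gt_at_top[of "K"]
  proof eventually_elim
    case (elim \<mu>)
    have mu: "2 * \<mu> > (2 ^ (N + 1) + 1) * Mnorm1 N m"
    proof -
      have "0 \<le> K" unfolding K_def using Mn_ge0 by simp
      then have "K < 2 * \<mu>" using elim by linarith
      then show ?thesis by (simp add: K_def Mn_def)
    qed
    have "\<bar>deriv (\<lambda>\<nu>. xvec N (p \<nu>) k) \<mu>\<bar> \<le> (\<Sum>j\<le>N. \<bar>deriv (\<lambda>\<nu>. xvec N (p \<nu>) j) \<mu>\<bar>)"
      by (rule member_le_sum[where f = "\<lambda>j. \<bar>deriv (\<lambda>\<nu>. xvec N (p \<nu>) j) \<mu>\<bar>"]) (use k in auto)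
    then have "norm (deriv (\<lambda>\<nu>. xvec N (p \<nu>) k) \<mu>) \<le> norm1 N (\<lambda>k. deriv (\<lambda>\<nu>. xvec N (p \<nu>) k) \<mu>)"
      unfolding norm1_def by simp
    also have "\<dots> \<le> 2 * real N / (2 * \<mu> - K)" using part2[OF mu] by (simp add: K_def Mn_def)
    finally show ?case .
  qed
  have f1: "filterlim (\<lambda>\<mu>::real. 2 * \<mu>) at_top at_top"
    by (rule filterlim_tendsto_pos_mult_at_top[OF tendsto_const]) (auto intro: filterlim_ident)
  have f2: "filterlim (\<lambda>\<mu>::real. - K + 2 * \<mu>) at_top at_top"
    by (rule filterlim_tendsto_add_at_top[OF tendsto_const f1])
  have e: "(\<lambda>\<mu>::real. - K + 2 * \<mu>) = (\<lambda>\<mu>. 2 * \<mu> - K)" by auto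
  show "((\<lambda>\<mu>. 2 * real N / (2 * \<mu> - K)) \<longlongrightarrow> 0) at_top"
    by (rule tendsto_divide_0[OF tendsto_const filterlim_at_top_imp_at_infinity]) (use f2 e in simp)
qed

end

theorem theorem1:
  fixes N :: nat and m :: "nat \<Rightarrow> real" and p :: "real \<Rightarrow> nat \<Rightarrow> real"
  assumes N: "N \<ge> 1"
    and hp: "\<And>\<mu>. \<mu> > 0 \<Longrightarrow>
        (\<forall>k\<le>N. 0 < p \<mu> k) \<and> (\<Sum>k\<le>N. p \<mu> k) = 1 \<and>
        (\<forall>i\<le>N. m i * p \<mu> i + \<mu> * (\<Sum>j\<le>N. Qmat N i j * p \<mu> j)
                 = (\<Sum>j\<le>N. m j * p \<mu> j) * p \<mu> i)"
  shows "(\<forall>\<mu>>0. norm1 N (\<lambda>i. xvec N (p \<mu>) i - xhat N i) \<le> Mnorm1 N m / \<mu>)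
    \<and> (\<forall>\<mu>. 2 * \<mu> > (2 ^ (N + 1) + 1) * Mnorm1 N m \<longrightarrow>
          (\<forall>k\<le>N. (\<lambda>\<nu>. xvec N (p \<nu>) k) differentiable (at \<mu>)) \<and>
          norm1 N (\<lambda>k. deriv (\<lambda>\<nu>. xvec N (p \<nu>) k) \<mu>)
            \<le> 2 * real N / (2 * \<mu> - (2 ^ (N + 1) + 1) * Mnorm1 N m))
    \<and> (\<forall>k\<le>N. ((\<lambda>\<mu>. xvec N (p \<mu>) k) \<longlongrightarrow> xhat N k) at_top)
    \<and> (\<forall>k\<le>N. ((\<lambda>\<mu>. deriv (\<lambda>\<nu>. xvec N (p \<nu>) k) \<mu>) \<longlongrightarrow> 0) at_top)"
proof -
  interpret setting N m p using N hp by unfold_locales auto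
  show ?thesis using part1 part2 lim1 lim2 by blast
qed

end
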